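(* Let $V$ be a simple vertex operator algebra containing a rational subVOA $W$ whose Virasoro element equals that of $V$. Then $V$ is projective as a $V$-module.
   Context: A VOA is rational if all its modules are completely reducible. $\mathrm{mod}(V)$ is the category of $\mathbb{N}$-graded $V$-modules with composition series of finite length; $P\in\mathrm{mod}(V)$ is projective if every $V$-epimorphism $X\to P$ with $X\in\mathrm{mod}(V)$ splits. *)

theory Defs
  imports Complex_Main
begin

class cvs = ab_group_add +
  fixes cscale :: "complex \<Rightarrow> 'a \<Rightarrow> 'a"  (infixr "*c" 75)
  assumes cscale_add_right: "k *c (x + y) = k *c x + k *c y"
    and cscale_add_left: "(k + l) *c x = k *c x + l *c x"
    and cscale_assoc: "k *c (l *c x) = (k * l) *c x"
    and cscale_one: "1 *c x = x"

abbreviation csubspace :: "'a::cvs set \<Rightarrow> bool" where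
  "csubspace S \<equiv> module.subspace cscale S"

abbreviation cspan :: "'a::cvs set \<Rightarrow> 'a set" where
  "cspan S \<equiv> module.span cscale S"

text \<open>A vertex operator is given by its modes: Y a n b is the n-th product a_(n) b,
  i.e. Y(a,z) b = sum over n of (Y a n b) z^(-n-1).  The Jacobi identity is stated in
  its equivalent Borcherds (mode) form; under truncation all sums below are finite,
  which is expressed by requiring equality of all sufficiently long partial sums.\<close>

definition borcherds ::
  "('v::cvs \<Rightarrow> int \<Rightarrow> 'v \<Rightarrow> 'v) \<Rightarrow> ('v \<Rightarrow> int \<Rightarrow> 'm::cvs \<Rightarrow> 'm) \<Rightarrow>
   'v \<Rightarrow> 'v \<Rightarrow> 'm \<Rightarrow> int \<Rightarrow> int \<Rightarrow> int \<Rightarrow> bool" where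
  "borcherds Y Ym a b w p q r \<longleftrightarrow> (\<exists>K0. \<forall>K\<ge>K0.
     (\<Sum>i<K. ((of_int p :: complex) gchoose i) *c Ym (Y a (r + int i) b) (p + q - int i) w) =
     (\<Sum>i<K. ((-1) ^ i * ((of_int r :: complex) gchoose i)) *c
        (Ym a (p + r - int i) (Ym b (q + int i) w)
         - (if even r then 1 else -1) *c Ym b (q + r - int i) (Ym a (p + int i) w))))"

definition is_module ::
  "'v::cvs set \<Rightarrow> ('v \<Rightarrow> int \<Rightarrow> 'v \<Rightarrow> 'v) \<Rightarrow> 'v \<Rightarrow> 'm::cvs set \<Rightarrow> ('v \<Rightarrow> int \<Rightarrow> 'm \<Rightarrow> 'm) \<Rightarrow> bool" where
  "is_module C Y vac M Ym \<longleftrightarrow>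
     csubspace M \<and>
     (\<forall>a\<in>C. \<forall>n. \<forall>x\<in>M. Ym a n x \<in> M) \<and>
     (\<forall>a\<in>C. \<forall>n. \<forall>x\<in>M. \<forall>y\<in>M. Ym a n (x + y) = Ym a n x + Ym a n y) \<and>
     (\<forall>a\<in>C. \<forall>n. \<forall>x\<in>M. \<forall>k. Ym a n (k *c x) = k *c Ym a n x) \<and>
     (\<forall>a\<in>C. \<forall>b\<in>C. \<forall>n. \<forall>x\<in>M. Ym (a + b) n x = Ym a n x + Ym b n x) \<and>
     (\<forall>a\<in>C. \<forall>k. \<forall>n. \<forall>x\<in>M. Ym (k *c a) n x = k *c Ym a n x) \<and>
     (\<forall>a\<in>C. \<forall>x\<in>M. \<exists>N. \<forall>n\<ge>N. Ym a n x = 0) \<and>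
     (\<forall>n. \<forall>x\<in>M. Ym vac n x = (if n = -1 then x else 0)) \<and>
     (\<forall>a\<in>C. \<forall>b\<in>C. \<forall>x\<in>M. \<forall>p q r. borcherds Y Ym a b x p q r)"

text \<open>Weight spaces V_k = {v. L(0) v = k v}, where L(n) = omega_(n+1).\<close>

definition wsp :: "'v::cvs set \<Rightarrow> ('v \<Rightarrow> int \<Rightarrow> 'v \<Rightarrow> 'v) \<Rightarrow> 'v \<Rightarrow> int \<Rightarrow> 'v set" where
  "wsp C Y \<omega> k = {v \<in> C. Y \<omega> 1 v = of_int k *c v}"

definition is_voa :: "'v::cvs set \<Rightarrow> ('v \<Rightarrow> int \<Rightarrow> 'v \<Rightarrow> 'v) \<Rightarrow> 'v \<Rightarrow> 'v \<Rightarrow> bool" where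
  "is_voa C Y vac \<omega> \<longleftrightarrow>
     is_module C Y vac C Y \<and> vac \<in> C \<and> \<omega> \<in> C \<and>
     (\<forall>a\<in>C. Y a (-1) vac = a \<and> (\<forall>n\<ge>0. Y a n vac = 0)) \<and>
     (\<exists>c::complex. \<forall>m n :: int. \<forall>v\<in>C.
        Y \<omega> (m + 1) (Y \<omega> (n + 1) v) - Y \<omega> (n + 1) (Y \<omega> (m + 1) v) =
          of_int (m - n) *c Y \<omega> (m + n + 1) v
          + (if m + n = 0 then (of_int (m ^ 3 - m) / 12 * c) *c v else 0)) \<and>
     (\<forall>a\<in>C. \<forall>n. \<forall>v\<in>C. Y (Y \<omega> 0 a) n v = (- of_int n) *c Y a (n - 1) v) \<and>
     C \<subseteq> cspan (\<Union>k. wsp C Y \<omega> k) \<and>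
     (\<forall>k. \<exists>B. finite B \<and> wsp C Y \<omega> k \<subseteq> cspan B) \<and>
     (\<exists>N. \<forall>k<N. wsp C Y \<omega> k \<subseteq> {0})"

definition ngradable ::
  "'v::cvs set \<Rightarrow> ('v \<Rightarrow> int \<Rightarrow> 'v \<Rightarrow> 'v) \<Rightarrow> 'v \<Rightarrow> 'm::cvs set \<Rightarrow> ('v \<Rightarrow> int \<Rightarrow> 'm \<Rightarrow> 'm) \<Rightarrow> bool" where
  "ngradable C Y \<omega> M Ym \<longleftrightarrow> (\<exists>g :: nat \<Rightarrow> 'm set.
     (\<forall>n. csubspace (g n) \<and> g n \<subseteq> M) \<and>
     M \<subseteq> cspan (\<Union>n. g n) \<and>
     (\<forall>F x. finite F \<and> (\<forall>n\<in>F. x n \<in> g n) \<and> sum x F = 0 \<longrightarrow> (\<forall>n\<in>F. x n = 0)) \<and>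
     (\<forall>k m. \<forall>a\<in>wsp C Y \<omega> k. \<forall>n. \<forall>x\<in>g n.
        Ym a m x \<in> (if k - m - 1 + int n \<ge> 0 then g (nat (k - m - 1 + int n)) else {0})))"

definition submod :: "'v set \<Rightarrow> 'm::cvs set \<Rightarrow> ('v \<Rightarrow> int \<Rightarrow> 'm \<Rightarrow> 'm) \<Rightarrow> 'm set \<Rightarrow> bool" where
  "submod C M Ym N \<longleftrightarrow> N \<subseteq> M \<and> csubspace N \<and> (\<forall>a\<in>C. \<forall>n. \<forall>x\<in>N. Ym a n x \<in> N)"

definition irred :: "'v set \<Rightarrow> 'm::cvs set \<Rightarrow> ('v \<Rightarrow> int \<Rightarrow> 'm \<Rightarrow> 'm) \<Rightarrow> bool" where
  "irred C M Ym \<longleftrightarrow> M \<noteq> {0} \<and> (\<forall>N. submod C M Ym N \<longrightarrow> N = {0} \<or> N = M)"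

definition compl_red :: "'v set \<Rightarrow> 'm::cvs set \<Rightarrow> ('v \<Rightarrow> int \<Rightarrow> 'm \<Rightarrow> 'm) \<Rightarrow> bool" where
  "compl_red C M Ym \<longleftrightarrow> M \<subseteq> cspan (\<Union>{N. submod C M Ym N \<and> irred C N Ym})"

definition rational :: "'x::cvs itself \<Rightarrow> 'v::cvs set \<Rightarrow> ('v \<Rightarrow> int \<Rightarrow> 'v \<Rightarrow> 'v) \<Rightarrow> 'v \<Rightarrow> 'v \<Rightarrow> bool" where
  "rational _ C Y vac \<omega> \<longleftrightarrow>
     (\<forall>(M :: 'x set) Ym. is_module C Y vac M Ym \<and> ngradable C Y \<omega> M Ym \<longrightarrow> compl_red C M Ym)"

definition finlen :: "'v set \<Rightarrow> 'm::cvs set \<Rightarrow> ('v \<Rightarrow> int \<Rightarrow> 'm \<Rightarrow> 'm) \<Rightarrow> bool" where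
  "finlen C M Ym \<longleftrightarrow> (\<exists>(k::nat) (ch :: nat \<Rightarrow> 'm set).
     ch 0 = {0} \<and> ch k = M \<and> (\<forall>i\<le>k. submod C M Ym (ch i)) \<and>
     (\<forall>i<k. ch i \<subset> ch (Suc i) \<and>
        \<not> (\<exists>N. submod C M Ym N \<and> ch i \<subset> N \<and> N \<subset> ch (Suc i))))"

definition in_modV ::
  "'v::cvs set \<Rightarrow> ('v \<Rightarrow> int \<Rightarrow> 'v \<Rightarrow> 'v) \<Rightarrow> 'v \<Rightarrow> 'v \<Rightarrow> 'm::cvs set \<Rightarrow> ('v \<Rightarrow> int \<Rightarrow> 'm \<Rightarrow> 'm) \<Rightarrow> bool" where
  "in_modV C Y vac \<omega> M Ym \<longleftrightarrow> is_module C Y vac M Ym \<and> ngradable C Y \<omega> M Ym \<and> finlen C M Ym"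

definition vhom ::
  "'v set \<Rightarrow> 'm::cvs set \<Rightarrow> ('v \<Rightarrow> int \<Rightarrow> 'm \<Rightarrow> 'm) \<Rightarrow> 'n::cvs set \<Rightarrow> ('v \<Rightarrow> int \<Rightarrow> 'n \<Rightarrow> 'n)
   \<Rightarrow> ('m \<Rightarrow> 'n) \<Rightarrow> bool" where
  "vhom C M1 Y1 M2 Y2 f \<longleftrightarrow> f ` M1 \<subseteq> M2 \<and>
     (\<forall>x\<in>M1. \<forall>y\<in>M1. f (x + y) = f x + f y) \<and>
     (\<forall>k. \<forall>x\<in>M1. f (k *c x) = k *c f x) \<and>
     (\<forall>a\<in>C. \<forall>n. \<forall>x\<in>M1. f (Y1 a n x) = Y2 a n (f x))"

definition projective ::
  "'x::cvs itself \<Rightarrow> 'v::cvs set \<Rightarrow> ('v \<Rightarrow> int \<Rightarrow> 'v \<Rightarrow> 'v) \<Rightarrow> 'v \<Rightarrow> 'v \<Rightarrow>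
   'p::cvs set \<Rightarrow> ('v \<Rightarrow> int \<Rightarrow> 'p \<Rightarrow> 'p) \<Rightarrow> bool" where
  "projective _ C Y vac \<omega> P YP \<longleftrightarrow> in_modV C Y vac \<omega> P YP \<and>
     (\<forall>(X :: 'x set) YX f. in_modV C Y vac \<omega> X YX \<and> vhom C X YX P YP f \<and> f ` X = P \<longrightarrow>
        (\<exists>g. vhom C P YP X YX g \<and> (\<forall>p\<in>P. f (g p) = p)))"

end

theory Submission imports Defs begin


interpretation cvs: module "cscale :: complex \<Rightarrow> 'a::cvs \<Rightarrow> 'a"
  by unfold_locales (simp_all add: cscale_add_right cscale_add_left cscale_assoc cscale_one)

lemma sum_single:
  fixes K :: nat
  assumes "j < K" "\<And>i. i < K \<Longrightarrow> i \<noteq> j \<Longrightarrow> t i = 0"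
  shows "(\<Sum>i<K. t i) = (t j :: 'a::comm_monoid_add)"
  using assms by (subst sum.remove[of "{..<K}" j]) (auto intro: sum.neutral)

lemma sum_two:
  fixes K :: nat
  assumes "1 < K" "\<And>i. i < K \<Longrightarrow> 2 \<le> i \<Longrightarrow> t i = 0"
  shows "(\<Sum>i<K. t i) = (t 0 + t 1 :: 'a::comm_monoid_add)"
proof -
  have "(\<Sum>i<K. t i) = (\<Sum>i<2. t i)"
    using assms by (intro sum.mono_neutral_right) auto
  also have "\<dots> = t 0 + t 1" by (simp add: numeral_2_eq_2)
  finally show ?thesis .
qed

context
  fixes C :: "'v::cvs set" and Y :: "'v \<Rightarrow> int \<Rightarrow> 'v \<Rightarrow> 'v" and vac :: 'v
    and M :: "'m::cvs set" and Ym :: "'v \<Rightarrow> int \<Rightarrow> 'm \<Rightarrow> 'm"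
  assumes modM: "is_module C Y vac M Ym"
begin

lemma m_sub: "csubspace M" using modM by (simp add: is_module_def)
lemma m_zero_in: "0 \<in> M" using m_sub cvs.subspace_0 by blast
lemma m_closed: "a \<in> C \<Longrightarrow> x \<in> M \<Longrightarrow> Ym a n x \<in> M" using modM by (simp add: is_module_def)
lemma m_add: "a \<in> C \<Longrightarrow> x \<in> M \<Longrightarrow> y \<in> M \<Longrightarrow> Ym a n (x + y) = Ym a n x + Ym a n y"
  using modM by (simp add: is_module_def)
lemma m_scale: "a \<in> C \<Longrightarrow> x \<in> M \<Longrightarrow> Ym a n (k *c x) = k *c Ym a n x"
  using modM by (simp add: is_module_def)
lemma m_addl: "a \<in> C \<Longrightarrow> b \<in> C \<Longrightarrow> x \<in> M \<Longrightarrow> Ym (a + b) n x = Ym a n x + Ym b n x"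
  using modM by (simp add: is_module_def)
lemma m_scalel: "a \<in> C \<Longrightarrow> x \<in> M \<Longrightarrow> Ym (k *c a) n x = k *c Ym a n x"
  using modM by (simp add: is_module_def)
lemma m_trunc: "a \<in> C \<Longrightarrow> x \<in> M \<Longrightarrow> \<exists>N. \<forall>n\<ge>N. Ym a n x = 0"
  using modM by (simp add: is_module_def)
lemma m_vac: "x \<in> M \<Longrightarrow> Ym vac n x = (if n = -1 then x else 0)"
  using modM by (simp add: is_module_def)
lemma m_borch: "a \<in> C \<Longrightarrow> b \<in> C \<Longrightarrow> x \<in> M \<Longrightarrow> borcherds Y Ym a b x p q r"
  using modM by (simp add: is_module_def)
lemma m_zero: "a \<in> C \<Longrightarrow> Ym a n 0 = 0"
proof -
  assume a: "a \<in> C"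
  have "Ym a n (0 + 0) = Ym a n 0 + Ym a n 0" using m_add[OF a m_zero_in m_zero_in] .
  then show ?thesis by simp
qed

end

lemma coef_m2: "(-1) ^ j * ((of_int (-2) :: complex) gchoose j) = of_nat j + 1"
proof -
  have "((of_int (-2) :: complex) gchoose j) = (-1)^j * ((of_nat j - of_int (-2) - 1) gchoose j)"
    by (rule gbinomial_negated_upper)
  also have "(of_nat j - of_int (-2) - 1 :: complex) = of_nat (Suc j)" by simp
  also have "(of_nat (Suc j) :: complex) gchoose j = of_nat (Suc j choose j)"
    by (rule binomial_gbinomial[symmetric])
  finally have "((of_int (-2) :: complex) gchoose j) = (-1)^j * of_nat (Suc j)" by simp
  then have "(-1) ^ j * ((of_int (-2) :: complex) gchoose j) = ((-1)^j * (-1)^j) * of_nat (Suc j)"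
    by (simp add: mult.assoc)
  also have "((-1::complex)^j * (-1)^j) = 1" by (simp add: power_mult_distrib[symmetric])
  finally show ?thesis by simp
qed

lemma voa_mod: "is_voa C Y vac \<omega> \<Longrightarrow> is_module C Y vac C Y" by (simp add: is_voa_def)
lemma voa_vac: "is_voa C Y vac \<omega> \<Longrightarrow> vac \<in> C" by (simp add: is_voa_def)
lemma voa_om: "is_voa C Y vac \<omega> \<Longrightarrow> \<omega> \<in> C" by (simp add: is_voa_def)
lemma voa_create: "is_voa C Y vac \<omega> \<Longrightarrow> a \<in> C \<Longrightarrow> Y a (-1) vac = a" by (simp add: is_voa_def)
lemma voa_ann: "is_voa C Y vac \<omega> \<Longrightarrow> a \<in> C \<Longrightarrow> n \<ge> 0 \<Longrightarrow> Y a n vac = 0" by (simp add: is_voa_def)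
lemma voa_L1: "is_voa C Y vac \<omega> \<Longrightarrow> a \<in> C \<Longrightarrow> v \<in> C \<Longrightarrow> Y (Y \<omega> 0 a) n v = (- of_int n) *c Y a (n - 1) v"
  by (simp add: is_voa_def)

context
  fixes C :: "'v::cvs set" and Y :: "'v \<Rightarrow> int \<Rightarrow> 'v \<Rightarrow> 'v" and vac :: 'v and \<omega> :: 'v
    and M :: "'m::cvs set" and Ym :: "'v \<Rightarrow> int \<Rightarrow> 'm \<Rightarrow> 'm"
  assumes modM: "is_module C Y vac M Ym" and voa: "is_voa C Y vac \<omega>"
begin

lemma m_deriv:
  assumes a: "a \<in> C" and y: "y \<in> M" and q: "q \<ge> 1"
  shows "Ym (Y \<omega> 0 a) q y = (- of_int q) *c Ym a (q - 1) y"
proof -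
  have vC: "vac \<in> C" using voa_vac[OF voa] .
  have oaC: "Y \<omega> 0 a \<in> C" using m_closed[OF voa_mod[OF voa] voa_om[OF voa] a] .
  have "Y (Y \<omega> 0 a) (-1) vac = (- of_int (-1)) *c Y a (-1 - 1) vac" using voa_L1[OF voa a vC] .
  then have e: "Y \<omega> 0 a = Y a (-2) vac" using voa_create[OF voa oaC] by (simp add: cscale_one)
  obtain K0 where K0: "\<forall>K\<ge>K0.
     (\<Sum>i<K. ((of_int 0 :: complex) gchoose i) *c Ym (Y a (-2 + int i) vac) (0 + q - int i) y) =
     (\<Sum>i<K. ((-1) ^ i * ((of_int (-2) :: complex) gchoose i)) *c
        (Ym a (0 + -2 - int i) (Ym vac (q + int i) y)
         - (if even (-2::int) then 1 else -1) *c Ym vac (q + -2 - int i) (Ym a (0 + int i) y)))"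
    using m_borch[OF modM a vC y, of 0 q "-2"] unfolding borcherds_def by blast
  define K where "K = max K0 (nat q + 1)"
  have "(\<Sum>i<K. ((of_int 0 :: complex) gchoose i) *c Ym (Y a (-2 + int i) vac) (0 + q - int i) y)
     = Ym (Y a (-2) vac) q y"
    by (subst sum_single[where j=0]) (auto simp: K_def gbinomial_0_left cscale_one)
  moreover have "(\<Sum>i<K. ((-1) ^ i * ((of_int (-2) :: complex) gchoose i)) *c
        (Ym a (0 + -2 - int i) (Ym vac (q + int i) y)
         - (if even (-2::int) then 1 else -1) *c Ym vac (q + -2 - int i) (Ym a (0 + int i) y)))
     = (- of_int q) *c Ym a (q - 1) y"
  proof (subst sum_single[where j="nat (q - 1)"])
    show "nat (q - 1) < K" using q by (simp add: K_def)
  next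
    fix i assume "i < K" "i \<noteq> nat (q - 1)"
    then have "q + -2 - int i \<noteq> -1" using q by auto
    moreover have "q + int i \<noteq> -1" using q by auto
    ultimately show "((-1) ^ i * ((of_int (-2) :: complex) gchoose i)) *c
        (Ym a (0 + -2 - int i) (Ym vac (q + int i) y)
         - (if even (-2::int) then 1 else -1) *c Ym vac (q + -2 - int i) (Ym a (0 + int i) y)) = 0"
      using m_vac[OF modM y] m_vac[OF modM m_closed[OF modM a y]] m_zero[OF modM a] by simp
  next
    have j: "int (nat (q - 1)) = q - 1" using q by simp
    have c: "(-1) ^ nat (q - 1) * ((of_int (-2) :: complex) gchoose nat (q - 1)) = of_int q"
      using coef_m2[of "nat (q - 1)"] q by (simp add: of_nat_nat)
    show "((-1) ^ nat (q - 1) * ((of_int (-2) :: complex) gchoose nat (q - 1))) *c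
        (Ym a (0 + -2 - int (nat (q - 1))) (Ym vac (q + int (nat (q - 1))) y)
         - (if even (-2::int) then 1 else -1) *c Ym vac (q + -2 - int (nat (q - 1))) (Ym a (0 + int (nat (q - 1))) y))
     = (- of_int q) *c Ym a (q - 1) y"
      unfolding c j using q m_vac[OF modM y] m_vac[OF modM m_closed[OF modM a y]] m_zero[OF modM a]
      by (simp add: cscale_one cvs.scale_minus_left cvs.scale_minus_right)
  qed
  ultimately show ?thesis using K0 e by (simp add: K_def)
qed


lemma m_comm0:
  assumes a: "a \<in> C" and y: "y \<in> M"
  shows "Ym (Y \<omega> 0 a) q y = Ym \<omega> 0 (Ym a q y) - Ym a q (Ym \<omega> 0 y)"
proof -
  have oC: "\<omega> \<in> C" using voa_om[OF voa] .
  obtain K0 where K0: "\<forall>K\<ge>K0.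
     (\<Sum>i<K. ((of_int 0 :: complex) gchoose i) *c Ym (Y \<omega> (0 + int i) a) (0 + q - int i) y) =
     (\<Sum>i<K. ((-1) ^ i * ((of_int 0 :: complex) gchoose i)) *c
        (Ym \<omega> (0 + 0 - int i) (Ym a (q + int i) y)
         - (if even (0::int) then 1 else -1) *c Ym a (q + 0 - int i) (Ym \<omega> (0 + int i) y)))"
    using m_borch[OF modM oC a y, of 0 q 0] unfolding borcherds_def by blast
  define K where "K = max K0 1"
  have "(\<Sum>i<K. ((of_int 0 :: complex) gchoose i) *c Ym (Y \<omega> (0 + int i) a) (0 + q - int i) y)
     = Ym (Y \<omega> 0 a) q y"
    by (subst sum_single[where j=0]) (auto simp: K_def gbinomial_0_left cscale_one)
  moreover have "(\<Sum>i<K. ((-1) ^ i * ((of_int 0 :: complex) gchoose i)) *c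
        (Ym \<omega> (0 + 0 - int i) (Ym a (q + int i) y)
         - (if even (0::int) then 1 else -1) *c Ym a (q + 0 - int i) (Ym \<omega> (0 + int i) y)))
     = Ym \<omega> 0 (Ym a q y) - Ym a q (Ym \<omega> 0 y)"
    by (subst sum_single[where j=0]) (auto simp: K_def gbinomial_0_left cscale_one)
  ultimately show ?thesis using K0 by (simp add: K_def)
qed

lemma m_comm1:
  assumes a: "a \<in> C" and y: "y \<in> M"
  shows "Ym (Y \<omega> 0 a) (1 + m) y + Ym (Y \<omega> 1 a) m y = Ym \<omega> 1 (Ym a m y) - Ym a m (Ym \<omega> 1 y)"
proof -
  have oC: "\<omega> \<in> C" using voa_om[OF voa] .
  obtain K0 where K0: "\<forall>K\<ge>K0.
     (\<Sum>i<K. ((of_int 1 :: complex) gchoose i) *c Ym (Y \<omega> (0 + int i) a) (1 + m - int i) y) =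
     (\<Sum>i<K. ((-1) ^ i * ((of_int 0 :: complex) gchoose i)) *c
        (Ym \<omega> (1 + 0 - int i) (Ym a (m + int i) y)
         - (if even (0::int) then 1 else -1) *c Ym a (m + 0 - int i) (Ym \<omega> (1 + int i) y)))"
    using m_borch[OF modM oC a y, of 1 m 0] unfolding borcherds_def by blast
  define K where "K = max K0 2"
  have g1: "((1 :: complex) gchoose i) = 0" if "2 \<le> i" for i
  proof -
    have "((of_nat 1 :: complex) gchoose i) = of_nat (1 choose i)"
      by (rule binomial_gbinomial[symmetric])
    then show ?thesis using that by simp
  qed
  have "(\<Sum>i<K. ((of_int 1 :: complex) gchoose i) *c Ym (Y \<omega> (0 + int i) a) (1 + m - int i) y)
     = Ym (Y \<omega> 0 a) (1 + m) y + Ym (Y \<omega> 1 a) m y"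
    by (subst sum_two) (auto simp: K_def g1 cscale_one)
  moreover have "(\<Sum>i<K. ((-1) ^ i * ((of_int 0 :: complex) gchoose i)) *c
        (Ym \<omega> (1 + 0 - int i) (Ym a (m + int i) y)
         - (if even (0::int) then 1 else -1) *c Ym a (m + 0 - int i) (Ym \<omega> (1 + int i) y)))
     = Ym \<omega> 1 (Ym a m y) - Ym a m (Ym \<omega> 1 y)"
    by (subst sum_single[where j=0]) (auto simp: K_def gbinomial_0_left cscale_one)
  ultimately show ?thesis using K0 by (simp add: K_def)
qed

lemma m_vaclike:
  assumes a: "a \<in> C" and y: "y \<in> M" and y0: "Ym \<omega> 0 y = 0"
  shows "\<forall>n\<ge>0. Ym a n y = 0"
proof -
  obtain N where N: "\<forall>n\<ge>N. Ym a n y = 0" using m_trunc[OF modM a y] by blast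
  have step: "Ym a m y = 0" if "m \<ge> 0" "Ym a (m + 1) y = 0" for m
  proof -
    have "Ym (Y \<omega> 0 a) (m + 1) y = Ym \<omega> 0 (Ym a (m + 1) y) - Ym a (m + 1) (Ym \<omega> 0 y)"
      using m_comm0[OF a y] .
    also have "\<dots> = 0" using that(2) y0 m_zero[OF modM voa_om[OF voa]] m_zero[OF modM a] by simp
    finally have "(- of_int (m + 1)) *c Ym a m y = 0" using m_deriv[OF a y, of "m + 1"] that(1) by simp
    then have "(- inverse (of_int (m + 1))) *c ((- of_int (m + 1)) *c Ym a m y) = 0" by simp
    moreover have "(- inverse (of_int (m + 1) :: complex)) * (- of_int (m + 1)) = 1"
    proof -
      have "(of_int (m + 1) :: complex) \<noteq> 0" using that(1) by (simp only: of_int_eq_0_iff)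
      then show ?thesis by (metis minus_mult_minus left_inverse)
    qed
    ultimately show ?thesis by (metis cscale_assoc cscale_one)
  qed
  have "\<forall>n. n \<ge> 0 \<longrightarrow> max N 0 - n \<le> int d \<longrightarrow> Ym a n y = 0" for d
  proof (induction d)
    case 0 then show ?case using N by auto
  next
    case (Suc d)
    show ?case
    proof (intro allI impI)
      fix n :: int assume n: "n \<ge> 0" "max N 0 - n \<le> int (Suc d)"
      show "Ym a n y = 0"
      proof (cases "max N 0 - n \<le> int d")
        case True then show ?thesis using Suc n by blast
      next
        case False
        then have "Ym a (n + 1) y = 0" using Suc.IH n by auto
        then show ?thesis using step n by blast
      qed
    qed
  qed
  then show ?thesis by (metis nat_0_le zero_le_imp_eq_int linear nat_le_iff)
qed

lemma m_section:
  assumes a: "a \<in> C" and b: "b \<in> C" and y: "y \<in> M" and vl: "\<forall>c\<in>C. \<forall>n\<ge>0. Ym c n y = 0"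
  shows "Ym (Y b n a) (-1) y = Ym b n (Ym a (-1) y)"
proof -
  obtain K0 where K0: "\<forall>K\<ge>K0.
     (\<Sum>i<K. ((of_int 0 :: complex) gchoose i) *c Ym (Y b (n + int i) a) (0 + -1 - int i) y) =
     (\<Sum>i<K. ((-1) ^ i * ((of_int n :: complex) gchoose i)) *c
        (Ym b (0 + n - int i) (Ym a (-1 + int i) y)
         - (if even n then 1 else -1) *c Ym a (-1 + n - int i) (Ym b (0 + int i) y)))"
    using m_borch[OF modM b a y, of 0 "-1" n] unfolding borcherds_def by blast
  define K where "K = max K0 1"
  have "(\<Sum>i<K. ((of_int 0 :: complex) gchoose i) *c Ym (Y b (n + int i) a) (0 + -1 - int i) y)
     = Ym (Y b n a) (-1) y"
    by (subst sum_single[where j=0]) (auto simp: K_def gbinomial_0_left cscale_one)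
  moreover have "(\<Sum>i<K. ((-1) ^ i * ((of_int n :: complex) gchoose i)) *c
        (Ym b (0 + n - int i) (Ym a (-1 + int i) y)
         - (if even n then 1 else -1) *c Ym a (-1 + n - int i) (Ym b (0 + int i) y)))
     = Ym b n (Ym a (-1) y)"
  proof (subst sum_single[where j=0])
    fix i assume "i < K" "i \<noteq> 0"
    then have "Ym a (-1 + int i) y = 0" using vl a by auto
    moreover have "Ym b (0 + int i) y = 0" using vl b by auto
    ultimately show "((-1) ^ i * ((of_int n :: complex) gchoose i)) *c
        (Ym b (0 + n - int i) (Ym a (-1 + int i) y)
         - (if even n then 1 else -1) *c Ym a (-1 + n - int i) (Ym b (0 + int i) y)) = 0"
      using m_zero[OF modM a] m_zero[OF modM b] by simp
  next
    have "Ym b 0 y = 0" using vl b by auto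
    then show "((-1) ^ 0 * ((of_int n :: complex) gchoose 0)) *c
        (Ym b (0 + n - int 0) (Ym a (-1 + int 0) y)
         - (if even n then 1 else -1) *c Ym a (-1 + n - int 0) (Ym b (0 + int 0) y)) = Ym b n (Ym a (-1) y)"
      using m_zero[OF modM a] by (simp add: cscale_one)
  qed (simp add: K_def)
  ultimately show ?thesis using K0 by (simp add: K_def)
qed

end


lemma cscale_cancel: "(c::complex) \<noteq> 0 \<Longrightarrow> c *c v = 0 \<Longrightarrow> v = 0"
  by (metis cscale_assoc cscale_one left_inverse cvs.scale_zero_right)

context
  fixes C :: "'v::cvs set" and Y :: "'v \<Rightarrow> int \<Rightarrow> 'v \<Rightarrow> 'v" and vac :: 'v and \<omega> :: 'v
  assumes voa: "is_voa C Y vac \<omega>"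
begin

lemma vmod: "is_module C Y vac C Y" using voa_mod[OF voa] .
lemma oC: "\<omega> \<in> C" using voa_om[OF voa] .

lemma wsp_sub: "csubspace (wsp C Y \<omega> k)"
  unfolding cvs.subspace_def wsp_def
proof (intro conjI ballI allI)
  show "0 \<in> {v \<in> C. Y \<omega> 1 v = of_int k *c v}"
    using m_zero_in[OF vmod] m_zero[OF vmod oC] by simp
next
  fix x y assume x: "x \<in> {v \<in> C. Y \<omega> 1 v = of_int k *c v}" and y: "y \<in> {v \<in> C. Y \<omega> 1 v = of_int k *c v}"
  then show "x + y \<in> {v \<in> C. Y \<omega> 1 v = of_int k *c v}"
    using m_add[OF vmod oC, of x y 1] cvs.subspace_add[OF m_sub[OF vmod]]
    by (simp add: cscale_add_right)
next
  fix c x assume x: "x \<in> {v \<in> C. Y \<omega> 1 v = of_int k *c v}"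
  then show "c *c x \<in> {v \<in> C. Y \<omega> 1 v = of_int k *c v}"
    using m_scale[OF vmod oC, of x 1 c] cvs.subspace_scale[OF m_sub[OF vmod]]
    by (simp add: mult.commute)
qed

lemma L0_sum: "finite F \<Longrightarrow> (\<forall>n\<in>F. x n \<in> C) \<Longrightarrow> Y \<omega> 1 (sum x F) = (\<Sum>n\<in>F. Y \<omega> 1 (x n))"
proof (induction F rule: finite_induct)
  case empty then show ?case using m_zero[OF vmod oC] by simp
next
  case (insert m F)
  have "sum x F \<in> C" using insert.prems by (intro cvs.subspace_sum[OF m_sub[OF vmod]]) auto
  then show ?case using insert m_add[OF vmod oC, of "x m" "sum x F" 1] by simp
qed

lemma wsp_indep:
  "finite F \<Longrightarrow> (\<forall>n\<in>F. x n \<in> wsp C Y \<omega> (N + int n)) \<Longrightarrow> sum x F = 0 \<Longrightarrow> (\<forall>n\<in>F. x n = 0)"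
proof (induction F arbitrary: x rule: finite_induct)
  case empty then show ?case by simp
next
  case (insert m F)
  have xC: "\<forall>n\<in>insert m F. x n \<in> C" using insert.prems(1) by (auto simp: wsp_def)
  have xL: "Y \<omega> 1 (x n) = of_int (N + int n) *c x n" if "n \<in> insert m F" for n
    using insert.prems(1) that by (auto simp: wsp_def)
  have s0: "x m + sum x F = 0" using insert by simp
  have "Y \<omega> 1 (sum x (insert m F)) = 0" using insert.prems(2) m_zero[OF vmod oC] by simp
  then have "(\<Sum>n\<in>insert m F. of_int (N + int n) *c x n) = 0"
    using L0_sum[OF _ xC] insert.hyps xL by simp
  then have e1: "of_int (N + int m) *c x m + (\<Sum>n\<in>F. of_int (N + int n) *c x n) = 0"
    using insert.hyps by simp
  have "of_int (N + int m) *c (x m + sum x F) = 0" using s0 by simp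
  then have e2: "of_int (N + int m) *c x m + (\<Sum>n\<in>F. of_int (N + int m) *c x n) = 0"
    by (simp only: cvs.scale_right_distrib cvs.scale_sum_right)
  define x' where "x' n = of_int (int n - int m) *c x n" for n
  have x'e: "x' n = of_int (N + int n) *c x n - of_int (N + int m) *c x n" for n
  proof -
    have "(of_int (int n - int m) :: complex) = of_int (N + int n) - of_int (N + int m)" by simp
    then show ?thesis by (simp only: x'_def cvs.scale_left_diff_distrib)
  qed
  have "sum x' F = (\<Sum>n\<in>F. of_int (N + int n) *c x n - of_int (N + int m) *c x n)"
    by (rule sum.cong) (simp_all add: x'e)
  also have "\<dots> = (\<Sum>n\<in>F. of_int (N + int n) *c x n) - (\<Sum>n\<in>F. of_int (N + int m) *c x n)"
    by (rule sum_subtractf)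
  also have "\<dots> = 0"
  proof -
    have "(\<Sum>n\<in>F. of_int (N + int n) *c x n) = (\<Sum>n\<in>F. of_int (N + int m) *c x n)"
      using e1 e2 by (metis add_left_cancel)
    then show ?thesis by simp
  qed
  finally have "sum x' F = 0" .
  moreover have "\<forall>n\<in>F. x' n \<in> wsp C Y \<omega> (N + int n)"
    using insert.prems(1) cvs.subspace_scale[OF wsp_sub] by (auto simp: x'_def)
  ultimately have "\<forall>n\<in>F. x' n = 0" using insert.IH by blast
  then have xF: "\<forall>n\<in>F. x n = 0"
  proof (intro ballI)
    fix n assume "\<forall>n\<in>F. x' n = 0" "n \<in> F"
    moreover have "(of_int (int n - int m) :: complex) \<noteq> 0" using \<open>n \<in> F\<close> insert.hyps(2) by auto
    ultimately show "x n = 0" using cscale_cancel[of "of_int (int n - int m)" "x n"] by (simp add: x'_def)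
  qed
  then have "sum x F = 0" by simp
  then have "x m = 0" using s0 by simp
  then show ?case using xF by simp
qed

lemma wsp_act:
  assumes a: "a \<in> wsp C Y \<omega> k" and x: "x \<in> wsp C Y \<omega> j"
  shows "Y a m x \<in> wsp C Y \<omega> (j + k - m - 1)"
proof -
  have aC: "a \<in> C" and xC: "x \<in> C" and La: "Y \<omega> 1 a = of_int k *c a" and Lx: "Y \<omega> 1 x = of_int j *c x"
    using a x by (auto simp: wsp_def)
  have c: "Y (Y \<omega> 0 a) (1 + m) x + Y (Y \<omega> 1 a) m x = Y \<omega> 1 (Y a m x) - Y a m (Y \<omega> 1 x)"
    using m_comm1[OF vmod voa aC xC] .
  have t1: "Y (Y \<omega> 0 a) (1 + m) x = (- of_int (1 + m)) *c Y a m x"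
    using voa_L1[OF voa aC xC, of "1 + m"] by simp
  have t2: "Y (Y \<omega> 1 a) m x = of_int k *c Y a m x" using La m_scalel[OF vmod aC xC] by simp
  have t3: "Y a m (Y \<omega> 1 x) = of_int j *c Y a m x" using Lx m_scale[OF vmod aC xC] by simp
  have "(- of_int (1 + m)) *c Y a m x + of_int k *c Y a m x + of_int j *c Y a m x = Y \<omega> 1 (Y a m x)"
    using c unfolding t1 t2 t3 by (simp only: eq_diff_eq)
  then have "Y \<omega> 1 (Y a m x) = (- of_int (1 + m)) *c Y a m x + of_int k *c Y a m x + of_int j *c Y a m x"
    by (rule sym)
  also have "\<dots> = (- of_int (1 + m) + of_int k + of_int j) *c Y a m x"
    by (simp only: cvs.scale_left_distrib)
  also have "(- of_int (1 + m) + of_int k + of_int j :: complex) = of_int (j + k - m - 1)" by simp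
  finally show ?thesis using m_closed[OF vmod aC xC] by (simp add: wsp_def)
qed

end


lemma voa_in_modV:
  assumes voa: "is_voa C Y vac \<omega>" and irr: "irred C C Y"
  shows "in_modV C Y vac \<omega> C Y"
proof -
  have vmod: "is_module C Y vac C Y" using voa_mod[OF voa] .
  obtain N where N: "\<forall>k<N. wsp C Y \<omega> k \<subseteq> {0}" using voa unfolding is_voa_def by blast
  have span: "C \<subseteq> cspan (\<Union>k. wsp C Y \<omega> k)" using voa unfolding is_voa_def by blast
  define g where "g n = wsp C Y \<omega> (N + int n)" for n :: nat
  have ng: "ngradable C Y \<omega> C Y"
    unfolding ngradable_def
  proof (rule exI[of _ g], intro conjI allI ballI impI)
    fix n show "csubspace (g n)" using wsp_sub[OF voa] by (simp add: g_def)
    show "g n \<subseteq> C" by (auto simp: g_def wsp_def)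
  next
    have "(\<Union>k. wsp C Y \<omega> k) \<subseteq> cspan (\<Union>n. g n)"
    proof
      fix v assume "v \<in> (\<Union>k. wsp C Y \<omega> k)"
      then obtain k where v: "v \<in> wsp C Y \<omega> k" by blast
      show "v \<in> cspan (\<Union>n. g n)"
      proof (cases "k < N")
        case True then show ?thesis using N v cvs.span_zero by blast
      next
        case False
        then have "g (nat (k - N)) = wsp C Y \<omega> k" by (simp add: g_def)
        then show ?thesis using v by (metis UN_I UNIV_I cvs.span_base)
      qed
    qed
    then have "cspan (\<Union>k. wsp C Y \<omega> k) \<subseteq> cspan (\<Union>n. g n)"
      by (intro cvs.span_minimal) auto
    then show "C \<subseteq> cspan (\<Union>n. g n)" using span by blast
  next
    fix F x n assume "finite F \<and> (\<forall>n\<in>F. x n \<in> g n) \<and> sum x F = 0" "n \<in> F"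
    then show "x n = 0" using wsp_indep[OF voa, of F x N] by (simp add: g_def)
  next
    fix k m a n x assume a: "a \<in> wsp C Y \<omega> k" and x: "x \<in> g n"
    have ax: "Y a m x \<in> wsp C Y \<omega> (N + int n + k - m - 1)"
      using wsp_act[OF voa a, of x "N + int n" m] x by (simp add: g_def)
    show "Y a m x \<in> (if k - m - 1 + int n \<ge> 0 then g (nat (k - m - 1 + int n)) else {0})"
    proof (cases "k - m - 1 + int n \<ge> 0")
      case True
      then have "N + int (nat (k - m - 1 + int n)) = N + int n + k - m - 1" by simp
      then have "g (nat (k - m - 1 + int n)) = wsp C Y \<omega> (N + int n + k - m - 1)" by (simp only: g_def)
      then show ?thesis using True ax by simp
    next
      case False
      then have lt: "N + int n + k - m - 1 < N" by simp
      show ?thesis using False ax N[rule_format, OF lt] by auto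
    qed
  qed
  have z: "0 \<in> C" using m_zero_in[OF vmod] .
  have sub0: "submod C C Y {0}"
    using z m_zero[OF vmod] by (auto simp: submod_def)
  have subC: "submod C C Y C"
    using m_sub[OF vmod] m_closed[OF vmod] by (auto simp: submod_def)
  have fl: "finlen C C Y"
    unfolding finlen_def
  proof (rule exI[of _ 1], rule exI[of _ "\<lambda>i. if i = 0 then {0} else C"], intro conjI allI impI)
    fix i :: nat assume "i \<le> 1"
    then show "submod C C Y (if i = 0 then {0} else C)" using sub0 subC by auto
  next
    fix i :: nat assume "i < 1"
    then have i: "i = 0" by simp
    show "(if i = 0 then {0} else C) \<subset> (if Suc i = 0 then {0} else C)"
      using i z irr by (auto simp: irred_def)
    show "\<not> (\<exists>N. submod C C Y N \<and> (if i = 0 then {0} else C) \<subset> N \<and> N \<subset> (if Suc i = 0 then {0} else C))"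
      using i irr by (auto simp: irred_def)
  qed simp_all
  show ?thesis using vmod ng fl by (simp add: in_modV_def)
qed

definition sumset :: "'a::cvs set \<Rightarrow> 'a set \<Rightarrow> 'a set" where
  "sumset A B = {a + b | a b. a \<in> A \<and> b \<in> B}"

lemma subspace_sumset: "csubspace A \<Longrightarrow> csubspace B \<Longrightarrow> csubspace (sumset A B)"
  unfolding cvs.subspace_def sumset_def
proof (intro conjI ballI allI)
  assume A: "0 \<in> A \<and> (\<forall>x\<in>A. \<forall>y\<in>A. x + y \<in> A) \<and> (\<forall>c. \<forall>x\<in>A. c *c x \<in> A)"
    and B: "0 \<in> B \<and> (\<forall>x\<in>B. \<forall>y\<in>B. x + y \<in> B) \<and> (\<forall>c. \<forall>x\<in>B. c *c x \<in> B)"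
  show "0 \<in> {a + b |a b. a \<in> A \<and> b \<in> B}" using A B by force
  fix x y assume "x \<in> {a + b |a b. a \<in> A \<and> b \<in> B}" "y \<in> {a + b |a b. a \<in> A \<and> b \<in> B}"
  then obtain a1 b1 a2 b2 where "x = a1 + b1" "y = a2 + b2" "a1 \<in> A" "a2 \<in> A" "b1 \<in> B" "b2 \<in> B" by blast
  then show "x + y \<in> {a + b |a b. a \<in> A \<and> b \<in> B}" using A B
    by (intro CollectI exI[of _ "a1 + a2"] exI[of _ "b1 + b2"]) (simp add: algebra_simps)
next
  fix c x
  assume A: "0 \<in> A \<and> (\<forall>x\<in>A. \<forall>y\<in>A. x + y \<in> A) \<and> (\<forall>c. \<forall>x\<in>A. c *c x \<in> A)"
    and B: "0 \<in> B \<and> (\<forall>x\<in>B. \<forall>y\<in>B. x + y \<in> B) \<and> (\<forall>c. \<forall>x\<in>B. c *c x \<in> B)"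
    and "x \<in> {a + b |a b. a \<in> A \<and> b \<in> B}"
  then obtain a1 b1 where "x = a1 + b1" "a1 \<in> A" "b1 \<in> B" by blast
  then show "c *c x \<in> {a + b |a b. a \<in> A \<and> b \<in> B}" using A B
    by (intro CollectI exI[of _ "c *c a1"] exI[of _ "c *c b1"]) (simp add: cscale_add_right)
qed

context
  fixes C :: "'v::cvs set" and Y :: "'v \<Rightarrow> int \<Rightarrow> 'v \<Rightarrow> 'v" and vac :: 'v
    and M :: "'m::cvs set" and Ym :: "'v \<Rightarrow> int \<Rightarrow> 'm \<Rightarrow> 'm"
  assumes modM: "is_module C Y vac M Ym"
begin

lemma submod_sumset:
  assumes A: "submod C M Ym A" and B: "submod C M Ym B"
  shows "submod C M Ym (sumset A B)"
  unfolding submod_def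
proof (intro conjI ballI allI)
  show "sumset A B \<subseteq> M" using A B cvs.subspace_add[OF m_sub[OF modM]]
    by (auto simp: sumset_def submod_def)
  show "csubspace (sumset A B)" using A B subspace_sumset by (auto simp: submod_def)
  fix a n x assume a: "a \<in> C" and "x \<in> sumset A B"
  then obtain u v where "x = u + v" "u \<in> A" "v \<in> B" by (auto simp: sumset_def)
  moreover have "u \<in> M" "v \<in> M" using A B \<open>u \<in> A\<close> \<open>v \<in> B\<close> by (auto simp: submod_def)
  ultimately have "Ym a n x = Ym a n u + Ym a n v" using m_add[OF modM a, of u v n] by simp
  moreover have "Ym a n u \<in> A" "Ym a n v \<in> B" using A B a \<open>u \<in> A\<close> \<open>v \<in> B\<close> by (auto simp: submod_def)
  ultimately show "Ym a n x \<in> sumset A B" unfolding sumset_def by blast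
qed

lemma comp_step:
  assumes K: "submod C M Ym K" and D: "submod C M Ym D" and DK: "D \<inter> K \<subseteq> {0}"
    and N: "submod C M Ym N" and irr: "irred C N Ym"
  shows "\<exists>D'. submod C M Ym D' \<and> D' \<inter> K \<subseteq> {0} \<and> sumset K D \<subseteq> sumset K D' \<and> N \<subseteq> sumset K D'"
proof -
  have KD: "submod C M Ym (sumset K D)" using submod_sumset[OF K D] .
  define E where "E = N \<inter> sumset K D"
  have "submod C N Ym E"
    using N KD cvs.subspace_inter by (auto simp: submod_def E_def)
  then have "E = {0} \<or> E = N" using irr by (auto simp: irred_def)
  then show ?thesis
  proof
    assume "E = N"
    then show ?thesis using D DK by (auto simp: E_def)
  next
    assume E0: "E = {0}"
    have z: "0 \<in> K" "0 \<in> D" "0 \<in> N" using K D N cvs.subspace_0 by (auto simp: submod_def)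
    have D'K: "sumset D N \<inter> K \<subseteq> {0}"
    proof
      fix z assume "z \<in> sumset D N \<inter> K"
      then obtain d n where zdn: "z = d + n" "d \<in> D" "n \<in> N" "z \<in> K" by (auto simp: sumset_def)
      have "- d \<in> D" using D zdn cvs.subspace_neg by (auto simp: submod_def)
      then have "n \<in> sumset K D" using zdn unfolding sumset_def
        by (intro CollectI exI[of _ z] exI[of _ "- d"]) simp
      then have "n = 0" using E0 zdn by (auto simp: E_def)
      then have "d \<in> D \<inter> K" using zdn by simp
      then have "d = 0" using DK by auto
      then show "z \<in> {0}" using zdn \<open>n = 0\<close> by simp
    qed
    have s1: "sumset K D \<subseteq> sumset K (sumset D N)"
    proof
      fix x assume "x \<in> sumset K D"
      then obtain k d where "x = k + d" "k \<in> K" "d \<in> D" by (auto simp: sumset_def)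
      moreover have "d \<in> sumset D N" using z \<open>d \<in> D\<close> unfolding sumset_def
        by (intro CollectI exI[of _ d] exI[of _ 0]) simp
      ultimately show "x \<in> sumset K (sumset D N)" unfolding sumset_def by blast
    qed
    have s2: "N \<subseteq> sumset K (sumset D N)"
    proof
      fix x assume "x \<in> N"
      then have "x \<in> sumset D N" using z unfolding sumset_def
        by (intro CollectI exI[of _ 0] exI[of _ x]) simp
      then show "x \<in> sumset K (sumset D N)" using z unfolding sumset_def
        by (intro CollectI exI[of _ 0] exI[of _ x]) simp
    qed
    show ?thesis using submod_sumset[OF D N] D'K s1 s2 by blast
  qed
qed

lemma comp_fin:
  assumes K: "submod C M Ym K"
  shows "finite T \<Longrightarrow> T \<subseteq> \<Union>{N. submod C M Ym N \<and> irred C N Ym} \<Longrightarrow>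
    \<exists>D. submod C M Ym D \<and> D \<inter> K \<subseteq> {0} \<and> T \<subseteq> sumset K D"
proof (induction T rule: finite_induct)
  case empty
  have "submod C M Ym {0}" using m_zero_in[OF modM] m_zero[OF modM] by (auto simp: submod_def)
  then show ?case by (intro exI[of _ "{0}"]) auto
next
  case (insert t T)
  then obtain D where D: "submod C M Ym D" "D \<inter> K \<subseteq> {0}" "T \<subseteq> sumset K D" by blast
  from insert.prems obtain N where N: "submod C M Ym N" "irred C N Ym" "t \<in> N" by blast
  from comp_step[OF K D(1,2) N(1,2)] obtain D' where
    "submod C M Ym D'" "D' \<inter> K \<subseteq> {0}" "sumset K D \<subseteq> sumset K D'" "N \<subseteq> sumset K D'" by blast
  then show ?case using D(3) N(3) by (intro exI[of _ D']) blast
qed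

end




lemma module_restrict:
  assumes "is_module V Y vac X YX" "W \<subseteq> V"
  shows "is_module W Y vac X YX"
  using assms unfolding is_module_def
  apply (elim conjE)
  apply (intro conjI)
          apply assumption
         apply (meson subsetD)
        apply (meson subsetD)
       apply (meson subsetD)
      apply (meson subsetD)
     apply (meson subsetD)
    apply (meson subsetD)
   apply assumption
  apply (meson subsetD)
  done

lemma ngrad_restrict:
  assumes "ngradable V Y \<omega> X YX" "W \<subseteq> V"
  shows "ngradable W Y \<omega> X YX"
proof -
  have sub: "wsp W Y \<omega> k \<subseteq> wsp V Y \<omega> k" for k using assms(2) by (auto simp: wsp_def)
  obtain g :: "nat \<Rightarrow> _" where g1: "\<forall>n. csubspace (g n) \<and> g n \<subseteq> X" and g2: "X \<subseteq> cspan (\<Union>n. g n)"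
    and g3: "\<forall>F x. finite F \<and> (\<forall>n\<in>F. x n \<in> g n) \<and> sum x F = 0 \<longrightarrow> (\<forall>n\<in>F. x n = 0)"
    and g4: "\<forall>k m. \<forall>a\<in>wsp V Y \<omega> k. \<forall>n. \<forall>x\<in>g n.
        YX a m x \<in> (if k - m - 1 + int n \<ge> 0 then g (nat (k - m - 1 + int n)) else {0})"
    using assms(1) unfolding ngradable_def by (elim exE conjE) assumption
  have g4': "\<forall>k m. \<forall>a\<in>wsp W Y \<omega> k. \<forall>n. \<forall>x\<in>g n.
        YX a m x \<in> (if k - m - 1 + int n \<ge> 0 then g (nat (k - m - 1 + int n)) else {0})"
  proof (intro allI ballI)
    fix k m a n x assume "a \<in> wsp W Y \<omega> k" "x \<in> g n"
    then show "YX a m x \<in> (if k - m - 1 + int n \<ge> 0 then g (nat (k - m - 1 + int n)) else {0})"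
      using g4 sub by blast
  qed
  show ?thesis unfolding ngradable_def by (rule exI[of _ g]) (intro conjI g1 g2 g3 g4')
qed

theorem theorem13:
  fixes V W :: "'v::cvs set" and Y :: "'v \<Rightarrow> int \<Rightarrow> 'v \<Rightarrow> 'v" and vac \<omega> :: 'v
  assumes "is_voa V Y vac \<omega>"
    and "irred V V Y"
    and "W \<subseteq> V"
    and "is_voa W Y vac \<omega>"
    and "rational TYPE('x::cvs) W Y vac \<omega>"
  shows "projective TYPE('x) V Y vac \<omega> V Y"
proof -
  note voaV = assms(1) and voaW = assms(4) and WV = assms(3)
  have vmod: "is_module V Y vac V Y" using voa_mod[OF voaV] .
  have vacV: "vac \<in> V" using voa_vac[OF voaV] .
  have oW: "\<omega> \<in> W" using voa_om[OF voaW] .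
  have oV: "\<omega> \<in> V" using oW WV by blast
  show ?thesis
    unfolding projective_def
  proof (intro conjI allI impI)
    show "in_modV V Y vac \<omega> V Y" using voa_in_modV[OF voaV assms(2)] .
  next
    fix X :: "'x set" and YX f
    assume H: "in_modV V Y vac \<omega> X YX \<and> vhom V X YX V Y f \<and> f ` X = V"
    have modX: "is_module V Y vac X YX" and ngX: "ngradable V Y \<omega> X YX"
      using H by (auto simp: in_modV_def)
    have modXW: "is_module W Y vac X YX" using module_restrict[OF modX WV] .
    have cr: "compl_red W X YX"
      using assms(5)[unfolded rational_def, rule_format, OF conjI[OF modXW ngrad_restrict[OF ngX WV]]] .
    have fX: "x \<in> X \<Longrightarrow> f x \<in> V" for x using H by (auto simp: vhom_def)
    have fadd: "x \<in> X \<Longrightarrow> y \<in> X \<Longrightarrow> f (x + y) = f x + f y" for x y using H by (auto simp: vhom_def)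
    have fscale: "x \<in> X \<Longrightarrow> f (k *c x) = k *c f x" for x k using H by (auto simp: vhom_def)
    have fhom: "a \<in> V \<Longrightarrow> x \<in> X \<Longrightarrow> f (YX a n x) = Y a n (f x)" for a n x using H by (auto simp: vhom_def)
    have z: "0 \<in> X" using m_zero_in[OF modX] .
    have f0: "f 0 = 0" using fadd[OF z z] by simp
    define K where "K = {x \<in> X. f x = 0}"
    have Ksub: "submod W X YX K"
      unfolding submod_def cvs.subspace_def
    proof (intro conjI ballI allI)
      show "K \<subseteq> X" by (auto simp: K_def)
      show "0 \<in> K" using z f0 by (simp add: K_def)
      fix x y assume "x \<in> K" "y \<in> K"
      then show "x + y \<in> K" using fadd cvs.subspace_add[OF m_sub[OF modX]] by (auto simp: K_def)
    next
      fix c x assume "x \<in> K"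
      then show "c *c x \<in> K" using fscale cvs.subspace_scale[OF m_sub[OF modX]] by (auto simp: K_def)
    next
      fix a n x assume "a \<in> W" "x \<in> K"
      then have "a \<in> V" using WV by blast
      then show "YX a n x \<in> K" using \<open>x \<in> K\<close> fhom m_closed[OF modX] m_zero[OF vmod]
        by (auto simp: K_def)
    qed
    obtain x0 where x0: "x0 \<in> X" "f x0 = vac" using H vacV by blast
    have "x0 \<in> cspan (\<Union>{N. submod W X YX N \<and> irred W N YX})"
      using cr x0 by (auto simp: compl_red_def)
    then obtain t r where t: "finite t" "t \<subseteq> \<Union>{N. submod W X YX N \<and> irred W N YX}"
      and x0e: "x0 = (\<Sum>a\<in>t. r a *c a)"
      unfolding cvs.span_explicit by auto
    obtain D where D: "submod W X YX D" "D \<inter> K \<subseteq> {0}" "t \<subseteq> sumset K D"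
      using comp_fin[OF modXW Ksub t] by blast
    have ssub: "csubspace (sumset K D)" using subspace_sumset Ksub D(1) by (auto simp: submod_def)
    have "x0 \<in> sumset K D" unfolding x0e
      using D(3) by (intro cvs.subspace_sum[OF ssub] cvs.subspace_scale[OF ssub]) auto
    then obtain k c where kc: "x0 = k + c" "k \<in> K" "c \<in> D" by (auto simp: sumset_def)
    have cX: "c \<in> X" using kc D(1) by (auto simp: submod_def)
    have kX: "k \<in> X" using kc by (auto simp: K_def)
    have fc: "f c = vac" using x0 kc fadd[OF kX cX] by (simp add: K_def)
    have "YX \<omega> 0 c \<in> D" using D(1) oW kc by (auto simp: submod_def)
    moreover have "YX \<omega> 0 c \<in> K"
      using fhom[OF oV cX] fc voa_ann[OF voaV oV] m_closed[OF modX oV cX] by (simp add: K_def)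
    ultimately have c0: "YX \<omega> 0 c = 0" using D(2) by blast
    have vl: "\<forall>a\<in>V. \<forall>n\<ge>0. YX a n c = 0" using m_vaclike[OF modX voaV _ cX c0] by blast
    show "\<exists>g. vhom V V Y X YX g \<and> (\<forall>p\<in>V. f (g p) = p)"
    proof (rule exI[of _ "\<lambda>a. YX a (-1) c"], intro conjI ballI)
      show "vhom V V Y X YX (\<lambda>a. YX a (-1) c)"
        unfolding vhom_def
      proof (intro conjI ballI allI)
        show "(\<lambda>a. YX a (-1) c) ` V \<subseteq> X" using m_closed[OF modX _ cX] by blast
      next
        fix a b assume "a \<in> V" "b \<in> V"
        then show "YX (a + b) (-1) c = YX a (-1) c + YX b (-1) c" using m_addl[OF modX _ _ cX] by blast
      next
        fix k a assume "a \<in> V"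
        then show "YX (k *c a) (-1) c = k *c YX a (-1) c" using m_scalel[OF modX _ cX] by blast
      next
        fix b n a assume "b \<in> V" "a \<in> V"
        then show "YX (Y b n a) (-1) c = YX b n (YX a (-1) c)" using m_section[OF modX voaV _ _ cX vl] by blast
      qed
    next
      fix p assume "p \<in> V"
      then show "f (YX p (-1) c) = p" using fhom[OF _ cX] fc voa_create[OF voaV] by simp
    qed
  qed
qed

end
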